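(* Let $a,b$ be coprime integers with $0<a\le b$ and let $a/b=[0,u_1,\dots,u_n]$ be a simple continued fraction expansion of even depth $n=2i$ ($i\ge 1$), with convergents $p_k/q_k$. Let $D$ be the standard line $\{(x,y)\in\mathbb{Z}^2: 0\le ax-by<a+b\}$, let $U_1=(0,0)$ and $U_2=(b,a)$, let $L_1$ be the lower leaning point of $D$ with $0<x\le b$, and $L_2=L_1+(b,a)$. Then \[ \overrightarrow{U_1L_1}=(q_{2i-1}+1,\;p_{2i-1}-1),\qquad \overrightarrow{L_1U_2}=(u_{2i}-1)(q_{2i-1},p_{2i-1})+(q_{2i-2},p_{2i-2})+(-1,1). \] Moreover, the Freeman word of the DSS $[U_1L_1]$ has $E(z_{2i-2})^{u_{2i-1}}$ as a left factor (prefix), and the Freeman word of the DSS $[L_1U_2]$ has $E(z_{2i-1})^{u_{2i}-1}$ as a right factor (suffix).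
   Context: A standard line $\{\mu\le ax-by<\mu+|a|+|b|\}$ is a 4-connected path of lattice points; points with $ax-by=\mu$ are upper leaning points, those with $ax-by=\mu+|a|+|b|-1$ lower leaning points. For $P,Q\in D$, $[PQ]$ denotes the path of points of $D$ from $P$ to $Q$; its Freeman word records its unit moves, $0$ for $(1,0)$ and $1$ for $(0,1)$. For $a/b=[0,u_1,\dots,u_n]$, $z_k=p_k/q_k=[0,u_1,\dots,u_k]$ with $(p_0,q_0)=(0,1)$, $(p_{-1},q_{-1})=(1,0)$ and $(p_k,q_k)=u_k(p_{k-1},q_{k-1})+(p_{k-2},q_{k-2})$. Words: $E(z_0)=0$, $E(z_1)=0^{u_1}1$, $E(z_{2j+1})=E(z_{2j})^{u_{2j+1}}E(z_{2j-1})$, $E(z_{2j})=E(z_{2j-2})E(z_{2j-1})^{u_{2j}}$. *)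

theory Defs
  imports Complex_Main "HOL-Library.Sublist"
begin

fun cfv :: "nat list \<Rightarrow> real" where
  "cfv [] = 0"
| "cfv [x] = real x"
| "cfv (x # y # ys) = real x + 1 / cfv (y # ys)"

definition cf0 :: "(nat \<Rightarrow> nat) \<Rightarrow> nat \<Rightarrow> real" where
  "cf0 u n = 1 / cfv (map u [1..<Suc n])"

(* convergents p_k, q_k for k >= 0, using p_{-1}=1, q_{-1}=0, p_0=0, q_0=1 *)
fun cp :: "(nat \<Rightarrow> nat) \<Rightarrow> nat \<Rightarrow> nat" where
  "cp u 0 = 0"
| "cp u (Suc 0) = u 1 * 0 + 1"
| "cp u (Suc (Suc k)) = u (Suc (Suc k)) * cp u (Suc k) + cp u k"

fun cq :: "(nat \<Rightarrow> nat) \<Rightarrow> nat \<Rightarrow> nat" where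
  "cq u 0 = 1"
| "cq u (Suc 0) = u 1 * 1 + 0"
| "cq u (Suc (Suc k)) = u (Suc (Suc k)) * cq u (Suc k) + cq u k"

definition wpow :: "'a list \<Rightarrow> nat \<Rightarrow> 'a list" where
  "wpow w k = concat (replicate k w)"

fun E :: "(nat \<Rightarrow> nat) \<Rightarrow> nat \<Rightarrow> nat list" where
  "E u 0 = [0]"
| "E u (Suc 0) = wpow [0] (u 1) @ [1]"
| "E u (Suc (Suc k)) =
     (if odd (Suc (Suc k))
      then wpow (E u (Suc k)) (u (Suc (Suc k))) @ E u k
      else E u k @ wpow (E u (Suc k)) (u (Suc (Suc k))))"

definition in_line :: "int \<Rightarrow> int \<Rightarrow> int \<Rightarrow> int \<times> int \<Rightarrow> bool" where
  "in_line a b mu P \<longleftrightarrow> mu \<le> a * fst P - b * snd P \<and> a * fst P - b * snd P < mu + \<bar>a\<bar> + \<bar>b\<bar>"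

definition lower_leaning :: "int \<Rightarrow> int \<Rightarrow> int \<Rightarrow> int \<times> int \<Rightarrow> bool" where
  "lower_leaning a b mu P \<longleftrightarrow> a * fst P - b * snd P = mu + \<bar>a\<bar> + \<bar>b\<bar> - 1"

(* next point of the 4-connected path of D (for a, b >= 0): (x+1,y) if in D, else (x,y+1) *)
definition next_pt :: "int \<Rightarrow> int \<Rightarrow> int \<Rightarrow> int \<times> int \<Rightarrow> int \<times> int" where
  "next_pt a b mu P = (if in_line a b mu (fst P + 1, snd P) then (fst P + 1, snd P) else (fst P, snd P + 1))"

fun fword :: "int \<Rightarrow> int \<Rightarrow> int \<Rightarrow> int \<times> int \<Rightarrow> nat \<Rightarrow> nat list" where
  "fword a b mu P 0 = []"
| "fword a b mu P (Suc m) =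
     (if next_pt a b mu P = (fst P + 1, snd P) then 0 else 1) # fword a b mu (next_pt a b mu P) m"

definition freeman :: "int \<Rightarrow> int \<Rightarrow> int \<Rightarrow> int \<times> int \<Rightarrow> int \<times> int \<Rightarrow> nat list" where
  "freeman a b mu P Q = fword a b mu P (nat ((fst Q + snd Q) - (fst P + snd P)))"

end

theory Submission imports Defs begin

definition chr :: "nat \<Rightarrow> nat \<Rightarrow> nat list" where
  "chr p q = map (\<lambda>s. p*(s+1) div (p+q) - p*s div (p+q)) [0..<p+q]"

lemma F1:
  fixes p1 q1 p2 q2 s :: nat
  assumes det: "q1*p2 = p1*q2 + 1" and m1: "p1+q1 \<ge> 1" and m2: "p2+q2 \<ge> 1" and s: "s \<le> p1+q1"
  shows "(p1+p2)*s div (p1+q1+(p2+q2)) = p1*s div (p1+q1)"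
proof -
  define M1 where "M1 = p1+q1"
  define M where "M = p1+q1+(p2+q2)"
  define P where "P = p1+p2"
  define f where "f = p1*s div M1"
  define j where "j = p1*s mod M1"
  have key: "M1*P = p1*M + 1" using det unfolding M1_def P_def M_def by (simp add: algebra_simps)
  have pj: "p1*s = f*M1 + j" unfolding f_def j_def by simp
  have jl: "j < M1" unfolding j_def M1_def using m1 by (intro mod_less_divisor) linarith
  have "P*s*M1 = p1*s*M + s" using key by (metis add_mult_distrib mult.commute mult.left_commute mult_1)
  hence e: "P*s*M1 = f*M1*M + j*M + s" using pj by (simp add: algebra_simps)
  have "M*f*M1 \<le> P*s*M1" using e by (simp add: algebra_simps)
  moreover have "0 < M1" using m1 unfolding M1_def by linarith
  ultimately have lo: "M*f \<le> P*s" using mult_le_cancel2 by blast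
  have "(j+1)*M \<le> M1*M" using jl by (intro mult_le_mono1) simp
  hence "j*M + M \<le> M1*M" by simp
  moreover have "s < M" using s m2 unfolding M_def by simp
  ultimately have "j*M + s < M1 * M" by linarith
  hence "P*s*M1 < M*Suc f*M1" using e by (simp add: algebra_simps)
  hence hi: "P*s < M*Suc f" by simp
  have "P*s div M = f" by (rule div_nat_eqI[OF lo hi])
  thus ?thesis unfolding P_def M_def f_def M1_def .
qed

lemma F2:
  fixes p1 q1 p2 q2 t :: nat
  assumes det: "q1*p2 = p1*q2 + 1" and m1: "p1+q1 \<ge> 1" and m2: "p2+q2 \<ge> 1" and t: "t \<le> p2+q2"
  shows "(p1+p2)*(p1+q1+t) div (p1+q1+(p2+q2)) = p1 + p2*t div (p2+q2)"
proof -
  define M1 where "M1 = p1+q1"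
  define M2 where "M2 = p2+q2"
  define M where "M = p1+q1+(p2+q2)"
  define P where "P = p1+p2"
  define g where "g = p2*t div M2"
  define j where "j = p2*t mod M2"
  have key1: "M1*P = p1*M + 1" using det unfolding M1_def P_def M_def by (simp add: algebra_simps)
  have key2: "M2*P + 1 = p2*M" using det unfolding M2_def P_def M_def by (simp add: algebra_simps)
  have pj: "p2*t = g*M2 + j" unfolding g_def j_def by simp
  have jl: "j < M2" unfolding j_def M2_def using m2 by (intro mod_less_divisor) linarith
  have E0: "P*(M1+t)*M2 + t = (M1*P)*M2 + t*(M2*P + 1)" by (simp add: algebra_simps)
  also have "\<dots> = (p1*M + 1)*M2 + t*(p2*M)" using key1 key2 by simp
  also have "\<dots> = p1*M*M2 + M2 + (p2*t)*M" by (simp add: algebra_simps)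
  also have "\<dots> = p1*M*M2 + M2 + g*M2*M + j*M" using pj by (simp add: algebra_simps)
  finally have E: "P*(M1+t)*M2 + t = p1*M*M2 + M2 + g*M2*M + j*M" .
  define X where "X = P*(M1+t)*M2"
  define Y where "Y = p1*M*M2"
  define Z where "Z = g*M2*M"
  define W where "W = j*M"
  define V where "V = M2*M"
  have E': "X + t = Y + M2 + Z + W" using E unfolding X_def Y_def Z_def W_def .
  have tM: "t \<le> M2" using t unfolding M2_def .
  have A: "M*(p1+g)*M2 = Y + Z" unfolding Y_def Z_def by (simp add: algebra_simps)
  have "M*(p1+g)*M2 \<le> P*(M1+t)*M2" using E' tM A unfolding X_def[symmetric] by linarith
  moreover have "0 < M2" using m2 unfolding M2_def by linarith
  ultimately have lo: "M*(p1+g) \<le> P*(M1+t)" using mult_le_cancel2 by blast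
  have "(j+1)*M \<le> M2*M" using jl by (intro mult_le_mono1) simp
  hence "j*M + M \<le> M2*M" by simp
  hence WV: "W + M \<le> V" unfolding W_def V_def .
  have MM: "M2 < M" using m1 unfolding M_def M2_def by linarith
  have B: "M*Suc (p1+g)*M2 = Y + Z + V" unfolding Y_def Z_def V_def by (simp add: algebra_simps)
  have "P*(M1+t)*M2 < M*Suc (p1+g)*M2" using E' WV MM B unfolding X_def[symmetric] by linarith
  hence hi: "P*(M1+t) < M*Suc (p1+g)" by simp
  have "P*(M1+t) div M = p1 + g" by (rule div_nat_eqI[OF lo hi])
  thus ?thesis unfolding P_def M_def g_def M1_def M2_def .
qed

lemma length_chr[simp]: "length (chr p q) = p+q" by (simp add: chr_def)

lemma nth_chr: "s < p+q \<Longrightarrow> chr p q ! s = p*(s+1) div (p+q) - p*s div (p+q)"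
  by (simp add: chr_def)

lemma chr_concat:
  fixes p1 q1 p2 q2 :: nat
  assumes det: "q1*p2 = p1*q2 + 1" and m1: "p1+q1 \<ge> 1" and m2: "p2+q2 \<ge> 1"
  shows "chr p1 q1 @ chr p2 q2 = chr (p1+p2) (q1+q2)"
proof (rule nth_equalityI)
  show "length (chr p1 q1 @ chr p2 q2) = length (chr (p1 + p2) (q1 + q2))" by simp
next
  fix s assume "s < length (chr p1 q1 @ chr p2 q2)"
  hence sl: "s < p1+q1+(p2+q2)" by simp
  have MM: "p1 + p2 + (q1 + q2) = p1+q1+(p2+q2)" by simp
  show "(chr p1 q1 @ chr p2 q2) ! s = chr (p1 + p2) (q1 + q2) ! s"
  proof (cases "s < p1+q1")
    case True
    have "(chr p1 q1 @ chr p2 q2) ! s = chr p1 q1 ! s" using True by (simp add: nth_append)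
    also have "\<dots> = p1*(s+1) div (p1+q1) - p1*s div (p1+q1)" using True by (simp add: nth_chr)
    also have "\<dots> = (p1+p2)*(s+1) div (p1+q1+(p2+q2)) - (p1+p2)*s div (p1+q1+(p2+q2))"
      using F1[OF det m1 m2, of s] F1[OF det m1 m2, of "s+1"] True by simp
    also have "\<dots> = chr (p1 + p2) (q1 + q2) ! s" using sl by (simp add: nth_chr MM)
    finally show ?thesis .
  next
    case False
    define t where "t = s - (p1+q1)"
    have st: "s = p1+q1+t" using False unfolding t_def by simp
    have tl: "t < p2+q2" using sl st by simp
    have "(chr p1 q1 @ chr p2 q2) ! s = chr p2 q2 ! t" using False by (simp add: nth_append t_def)
    also have "\<dots> = p2*(t+1) div (p2+q2) - p2*t div (p2+q2)" using tl by (simp add: nth_chr)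
    also have "\<dots> = (p1 + p2*(t+1) div (p2+q2)) - (p1 + p2*t div (p2+q2))" by simp
    also have "\<dots> = (p1+p2)*(p1+q1+(t+1)) div (p1+q1+(p2+q2)) - (p1+p2)*(p1+q1+t) div (p1+q1+(p2+q2))"
      using F2[OF det m1 m2, of t] F2[OF det m1 m2, of "t+1"] tl by simp
    also have "\<dots> = chr (p1 + p2) (q1 + q2) ! s" using sl st by (simp add: nth_chr MM)
    finally show ?thesis .
  qed
qed

lemma wpow_Suc: "wpow w (Suc k) = w @ wpow w k" by (simp add: wpow_def)
lemma wpow_Suc2: "wpow w (Suc k) = wpow w k @ w"
  by (induction k) (simp_all add: wpow_def)
lemma wpow_0[simp]: "wpow w 0 = []" by (simp add: wpow_def)
lemma length_wpow: "length (wpow w k) = k * length w"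
  by (induction k) (simp_all add: wpow_Suc)

lemma powR:
  fixes P1 Q1 P2 Q2 :: nat
  assumes det: "Q1*P2 = P1*Q2 + 1" and m1: "P1+Q1 \<ge> 1" and m2: "P2+Q2 \<ge> 1"
  shows "wpow (chr P1 Q1) j @ chr P2 Q2 = chr (j*P1 + P2) (j*Q1 + Q2)"
proof (induction j)
  case 0 then show ?case by simp
next
  case (Suc j)
  have d: "Q1*(j*P1+P2) = P1*(j*Q1+Q2) + 1" using det by (simp add: algebra_simps)
  have m: "j*P1+P2 + (j*Q1+Q2) \<ge> 1" using m2 by simp
  have "wpow (chr P1 Q1) (Suc j) @ chr P2 Q2 = chr P1 Q1 @ chr (j*P1 + P2) (j*Q1 + Q2)"
    using Suc by (simp add: wpow_Suc)
  also have "\<dots> = chr (P1 + (j*P1 + P2)) (Q1 + (j*Q1 + Q2))" by (rule chr_concat[OF d m1 m])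
  finally show ?case by (simp add: algebra_simps)
qed

lemma powL:
  fixes P1 Q1 P2 Q2 :: nat
  assumes det: "Q2*P1 = P2*Q1 + 1" and m1: "P1+Q1 \<ge> 1" and m2: "P2+Q2 \<ge> 1"
  shows "chr P2 Q2 @ wpow (chr P1 Q1) j = chr (P2 + j*P1) (Q2 + j*Q1)"
proof (induction j)
  case 0 then show ?case by simp
next
  case (Suc j)
  have d: "(Q2 + j*Q1)*P1 = (P2 + j*P1)*Q1 + 1" using det by (simp add: algebra_simps)
  have m: "P2 + j*P1 + (Q2 + j*Q1) \<ge> 1" using m2 by simp
  have "chr P2 Q2 @ wpow (chr P1 Q1) (Suc j) = chr (P2 + j*P1) (Q2 + j*Q1) @ chr P1 Q1"
    using Suc by (simp add: wpow_Suc2)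
  also have "\<dots> = chr (P2 + j*P1 + P1) (Q2 + j*Q1 + Q1)" by (rule chr_concat[OF d m m1])
  finally show ?case by (simp add: algebra_simps)
qed

lemma M_pos: "cp u k + cq u k \<ge> 1"
  by (induction u k rule: cp.induct) (auto simp: algebra_simps)

lemma det_int: "int (cq u k * cp u (Suc k)) - int (cp u k * cq u (Suc k)) = (-1)^k"
proof (induction k)
  case 0 then show ?case by simp
next
  case (Suc k)
  have "int (cq u (Suc k) * cp u (Suc (Suc k))) - int (cp u (Suc k) * cq u (Suc (Suc k)))
      = int (cq u (Suc k) * cp u k) - int (cp u (Suc k) * cq u k)" by (simp add: algebra_simps)
  also have "\<dots> = - (int (cq u k * cp u (Suc k)) - int (cp u k * cq u (Suc k)))" by (simp add: algebra_simps)
  finally show ?case using Suc by simp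
qed

lemma det_even: assumes "even k" shows "cq u k * cp u (Suc k) = cp u k * cq u (Suc k) + 1"
proof -
  have e: "(-1::int)^k = 1" using assms by simp
  from det_int[of u k] have h: "int (cq u k * cp u (Suc k)) - int (cp u k * cq u (Suc k)) = 1" unfolding e .
  hence "int (cq u k * cp u (Suc k)) = int (cp u k * cq u (Suc k) + 1)" unfolding of_nat_add of_nat_1 by linarith
  thus ?thesis by (simp only: of_nat_eq_iff)
qed

lemma det_odd: assumes "odd k" shows "cp u k * cq u (Suc k) = cq u k * cp u (Suc k) + 1"
proof -
  have e: "(-1::int)^k = -1" using assms by simp
  from det_int[of u k] have h: "int (cq u k * cp u (Suc k)) - int (cp u k * cq u (Suc k)) = -1" unfolding e .
  hence "int (cp u k * cq u (Suc k)) = int (cq u k * cp u (Suc k) + 1)" unfolding of_nat_add of_nat_1 by linarith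
  thus ?thesis by (simp only: of_nat_eq_iff)
qed

lemma E_chr2: "E u k = chr (cp u k) (cq u k) \<and> E u (Suc k) = chr (cp u (Suc k)) (cq u (Suc k))"
proof (induction k)
  case 0
  have a: "E u 0 = chr (cp u 0) (cq u 0)" by (simp add: chr_def)
  have "wpow (chr 0 1) (u 1) @ chr 1 0 = chr (u 1 * 0 + 1) (u 1 * 1 + 0)"
    by (rule powR) simp_all
  moreover have "chr 0 1 = [0]" "chr 1 0 = [1]" by (simp_all add: chr_def)
  ultimately have "E u 1 = chr (cp u 1) (cq u 1)" by simp
  with a show ?case by simp
next
  case (Suc k)
  hence ih1: "E u k = chr (cp u k) (cq u k)" and ih2: "E u (Suc k) = chr (cp u (Suc k)) (cq u (Suc k))"
    by auto
  have "E u (Suc (Suc k)) = chr (cp u (Suc (Suc k))) (cq u (Suc (Suc k)))"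
  proof (cases "odd k")
    case True
    have d: "cq u (Suc k) * cp u k = cp u (Suc k) * cq u k + 1"
      using det_odd[OF True, of u] by (simp add: algebra_simps)
    have "wpow (chr (cp u (Suc k)) (cq u (Suc k))) (u (Suc (Suc k))) @ chr (cp u k) (cq u k)
       = chr (u (Suc (Suc k)) * cp u (Suc k) + cp u k) (u (Suc (Suc k)) * cq u (Suc k) + cq u k)"
      by (rule powR[OF d M_pos M_pos])
    then show ?thesis using True ih1 ih2 by simp
  next
    case False
    have d: "cq u k * cp u (Suc k) = cp u k * cq u (Suc k) + 1"
      using det_even False by simp
    have "chr (cp u k) (cq u k) @ wpow (chr (cp u (Suc k)) (cq u (Suc k))) (u (Suc (Suc k)))
       = chr (cp u k + u (Suc (Suc k)) * cp u (Suc k)) (cq u k + u (Suc (Suc k)) * cq u (Suc k))"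
      by (rule powL[OF d M_pos M_pos])
    then show ?thesis using False ih1 ih2 by (simp add: add.commute)
  qed
  with ih2 show ?case by simp
qed

lemma E_chr: "E u k = chr (cp u k) (cq u k)" using E_chr2 by blast

definition wordr :: "int \<Rightarrow> int \<Rightarrow> int \<Rightarrow> nat \<Rightarrow> nat list" where
  "wordr a N r k = map (\<lambda>s. nat ((r + a*(int s+1)) div N - (r + a*int s) div N)) [0..<k]"

lemma length_wordr[simp]: "length (wordr a N r k) = k" by (simp add: wordr_def)

lemma nth_wordr: "s < k \<Longrightarrow> wordr a N r k ! s = nat ((r + a*(int s+1)) div N - (r + a*int s) div N)"
  by (simp add: wordr_def)

lemma wordr_shift: assumes "N > 0" shows "wordr a N (r + N*c) k = wordr a N r k"
proof (rule nth_equalityI)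
  fix s assume "s < length (wordr a N (r + N * c) k)"
  hence s: "s < k" by simp
  have "(r + N*c + a*(int s+1)) div N = ((r + a*(int s+1)) + c*N) div N" by (simp add: algebra_simps)
  also have "\<dots> = (r + a*(int s+1)) div N + c" using assms by simp
  finally have 1: "(r + N*c + a*(int s+1)) div N = (r + a*(int s+1)) div N + c" .
  have "(r + N*c + a*int s) div N = ((r + a*int s) + c*N) div N" by (simp add: algebra_simps)
  also have "\<dots> = (r + a*int s) div N + c" using assms by simp
  finally have 2: "(r + N*c + a*int s) div N = (r + a*int s) div N + c" .
  show "wordr a N (r + N * c) k ! s = wordr a N r k ! s" using s 1 2 by (simp add: nth_wordr)
qed simp

lemma wordr_add: "wordr a N r (m+k) = wordr a N r m @ wordr a N (r + a*int m) k"
proof (rule nth_equalityI)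
  fix s assume "s < length (wordr a N r (m+k))"
  hence s: "s < m+k" by simp
  show "wordr a N r (m+k) ! s = (wordr a N r m @ wordr a N (r + a*int m) k) ! s"
  proof (cases "s < m")
    case True then show ?thesis by (simp add: nth_append nth_wordr)
  next
    case False
    hence "s - m < k" "int (s - m) = int s - int m" using s by auto
    then show ?thesis using False s by (simp add: nth_append nth_wordr algebra_simps)
  qed
qed simp

lemma wordr_Suc: "wordr a N r (Suc k) = nat ((r+a) div N - r div N) # wordr a N (r + a) k"
  unfolding wordr_def map_upt_Suc by (simp add: algebra_simps)

lemma fword_wordr:
  assumes a: "0 < a" and b: "0 < b"
  shows "0 \<le> a*x - b*y \<Longrightarrow> a*x - b*y < a+b \<Longrightarrow> fword a b 0 (x,y) k = wordr a (a+b) (a*x - b*y) k"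
proof (induction k arbitrary: x y)
  case 0 then show ?case by (simp add: wordr_def)
next
  case (Suc k)
  define r where "r = a*x - b*y"
  have r0: "0 \<le> r" "r < a+b" using Suc.prems unfolding r_def by auto
  show ?case
  proof (cases "r + a < a + b")
    case True
    have il: "in_line a b 0 (x+1, y)" unfolding in_line_def using True r0 a b
      by (simp add: r_def algebra_simps)
    hence np: "next_pt a b 0 (x,y) = (x+1,y)" by (simp add: next_pt_def)
    have l: "nat ((r+a) div (a+b) - r div (a+b)) = 0" using True r0 a by simp
    have "a*(x+1) - b*y = r + a" unfolding r_def by (simp add: algebra_simps)
    hence ih: "fword a b 0 (x+1,y) k = wordr a (a+b) (r+a) k"
      using Suc.IH[of "x+1" y] True r0 a by simp
    show ?thesis unfolding r_def[symmetric] using np ih l by (simp add: wordr_Suc)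
  next
    case False
    have il: "\<not> in_line a b 0 (x+1, y)" unfolding in_line_def using False r0 a b
      by (simp add: r_def algebra_simps)
    hence np: "next_pt a b 0 (x,y) = (x,y+1)" by (simp add: next_pt_def)
    have "(r+a) div (a+b) = ((r - b) + (a+b)) div (a+b)" by simp
    also have "\<dots> = (r - b) div (a+b) + 1" using a b by (intro div_add_self2) simp
    also have "(r - b) div (a+b) = 0" using False r0 a b by (intro div_pos_pos_trivial) auto
    finally have d1: "(r+a) div (a+b) = 1" by simp
    have l: "nat ((r+a) div (a+b) - r div (a+b)) = 1" using d1 r0 a by simp
    have "a*x - b*(y+1) = r + a - (a+b)" unfolding r_def by (simp add: algebra_simps)
    hence ih: "fword a b 0 (x,y+1) k = wordr a (a+b) (r + a - (a+b)) k"
      using Suc.IH[of x "y+1"] False r0 a b by simp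
    have "wordr a (a+b) (r + a - (a+b) + (a+b)*1) k = wordr a (a+b) (r + a - (a+b)) k"
      by (rule wordr_shift) (use a b in simp)
    hence "wordr a (a+b) (r+a) k = wordr a (a+b) (r + a - (a+b)) k" by simp
    show ?thesis unfolding r_def[symmetric] using np ih l \<open>wordr a (a+b) (r+a) k = _\<close>
      by (simp add: wordr_Suc)
  qed
qed

lemma wordr_chr: "wordr (int p) (int (p+q)) 0 (p+q) = chr p q"
proof (rule nth_equalityI)
  fix s assume "s < length (wordr (int p) (int (p+q)) 0 (p+q))"
  hence s: "s < p+q" by simp
  have "int p * (int s + 1) div int (p+q) = int (p*(s+1) div (p+q))"
    by (simp only: zdiv_int of_nat_mult of_nat_add of_nat_1)
  moreover have "int p * int s div int (p+q) = int (p*s div (p+q))"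
    by (simp only: zdiv_int of_nat_mult of_nat_add of_nat_1)
  moreover have "p*s div (p+q) \<le> p*(s+1) div (p+q)" by (intro div_le_mono) simp
  ultimately show "wordr (int p) (int (p+q)) 0 (p+q) ! s = chr p q ! s"
    using s by (simp add: nth_wordr nth_chr)
qed simp

lemma front2:
  "(cp u (Suc n) = cq (\<lambda>j. u (Suc j)) n \<and> cq u (Suc n) = u 1 * cq (\<lambda>j. u (Suc j)) n + cp (\<lambda>j. u (Suc j)) n) \<and>
   (cp u (Suc (Suc n)) = cq (\<lambda>j. u (Suc j)) (Suc n) \<and> cq u (Suc (Suc n)) = u 1 * cq (\<lambda>j. u (Suc j)) (Suc n) + cp (\<lambda>j. u (Suc j)) (Suc n))"
proof (induction n)
  case 0 then show ?case by (simp add: algebra_simps)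
next
  case (Suc n)
  define v where "v = (\<lambda>j. u (Suc j))"
  from Suc have A: "cp u (Suc n) = cq v n" and B: "cq u (Suc n) = u 1 * cq v n + cp v n"
    and C: "cp u (Suc (Suc n)) = cq v (Suc n)" and D: "cq u (Suc (Suc n)) = u 1 * cq v (Suc n) + cp v (Suc n)"
    unfolding v_def by auto
  have "cp u (Suc (Suc (Suc n))) = u (Suc(Suc(Suc n))) * cp u (Suc(Suc n)) + cp u (Suc n)" by simp
  also have "\<dots> = v (Suc(Suc n)) * cq v (Suc n) + cq v n" using A C by (simp add: v_def)
  also have "\<dots> = cq v (Suc(Suc n))" by simp
  finally have E1: "cp u (Suc (Suc (Suc n))) = cq v (Suc(Suc n))" .
  have "cq u (Suc (Suc (Suc n))) = u (Suc(Suc(Suc n))) * cq u (Suc(Suc n)) + cq u (Suc n)" by simp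
  also have "\<dots> = v (Suc(Suc n)) * (u 1 * cq v (Suc n) + cp v (Suc n)) + (u 1 * cq v n + cp v n)"
    using B D by (simp add: v_def)
  also have "\<dots> = u 1 * (v (Suc(Suc n)) * cq v (Suc n) + cq v n) + (v (Suc(Suc n)) * cp v (Suc n) + cp v n)"
    by (simp add: algebra_simps)
  also have "\<dots> = u 1 * cq v (Suc(Suc n)) + cp v (Suc(Suc n))" by simp
  finally have E2: "cq u (Suc (Suc (Suc n))) = u 1 * cq v (Suc(Suc n)) + cp v (Suc(Suc n))" .
  show ?case using C D E1 E2 unfolding v_def by blast
qed

lemma front: "cp u (Suc n) = cq (\<lambda>j. u (Suc j)) n" "cq u (Suc n) = u 1 * cq (\<lambda>j. u (Suc j)) n + cp (\<lambda>j. u (Suc j)) n"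
  using front2 by blast+

lemma cpq_pos: "\<forall>k\<in>{1..n}. u k \<ge> 1 \<Longrightarrow> cq u n \<ge> 1 \<and> (n \<ge> 1 \<longrightarrow> cp u n \<ge> 1)"
proof (induction u n rule: cp.induct)
  case (1 u) then show ?case by simp
next
  case (2 u) then show ?case by simp
next
  case (3 u k)
  have h1: "cq u (Suc k) \<ge> 1 \<and> cp u (Suc k) \<ge> 1" using 3 by auto
  have h2: "u (Suc (Suc k)) \<ge> 1" using "3.prems" by auto
  have "cq u (Suc (Suc k)) \<ge> 1" using h1 h2 by (simp add: add_increasing2)
  moreover have "cp u (Suc (Suc k)) \<ge> 1" using h1 h2 by (simp add: add_increasing2)
  ultimately show ?case by simp
qed

lemma cfv_Cons: "xs \<noteq> [] \<Longrightarrow> cfv (x # xs) = real x + 1 / cfv xs"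
  by (cases xs) auto

lemma cfv_conv: "\<forall>k\<in>{1..n}. u k \<ge> 1 \<Longrightarrow> n \<ge> 1 \<Longrightarrow> cfv (map u [1..<Suc n]) = real (cq u n) / real (cp u n)"
proof (induction n arbitrary: u)
  case 0 then show ?case by simp
next
  case (Suc n)
  show ?case
  proof (cases n)
    case 0 then show ?thesis by simp
  next
    case (Suc n')
    define v where "v = (\<lambda>j. u (Suc j))"
    have vpos: "\<forall>k\<in>{1..n}. v k \<ge> 1" using Suc.prems(1) unfolding v_def by auto
    have ih: "cfv (map v [1..<Suc n]) = real (cq v n) / real (cp v n)"
      using Suc.IH[OF vpos] Suc by simp
    have m: "map u [1..<Suc (Suc n)] = u 1 # map v [1..<Suc n]"
      unfolding v_def by (simp add: upt_conv_Cons map_Suc_upt[symmetric] del: upt_Suc)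
    have ne: "map v [1..<Suc n] \<noteq> []" using Suc by simp
    have pv: "cq v n \<ge> 1" "cp v n \<ge> 1" using cpq_pos[OF vpos] Suc by auto
    have "cfv (map u [1..<Suc (Suc n)]) = real (u 1) + real (cp v n) / real (cq v n)"
      unfolding m using cfv_Cons[OF ne] ih by simp
    also have "\<dots> = real (cq u (Suc n)) / real (cp u (Suc n))"
      unfolding front v_def[symmetric] using pv by (simp add: field_simps)
    finally show ?thesis .
  qed
qed

lemma length_E: "length (E u k) = cp u k + cq u k" by (simp add: E_chr)

theorem proposition2:
  fixes a b :: int and u :: "nat \<Rightarrow> nat" and i :: nat and L1 :: "int \<times> int"
  assumes "coprime a b" and "0 < a" and "a \<le> b"
    and "i \<ge> 1"
    and "\<forall>k\<in>{1..2*i}. u k \<ge> 1"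
    and "real_of_int a / real_of_int b = cf0 u (2*i)"
    and "lower_leaning a b 0 L1" and "0 < fst L1" and "fst L1 \<le> b"
  shows "((fst L1 - 0, snd L1 - 0) = (int (cq u (2*i-1)) + 1, int (cp u (2*i-1)) - 1)) \<and>
    ((b - fst L1, a - snd L1) =
           ((int (u (2*i)) - 1) * int (cq u (2*i-1)) + int (cq u (2*i-2)) - 1,
            (int (u (2*i)) - 1) * int (cp u (2*i-1)) + int (cp u (2*i-2)) + 1)) \<and>
    prefix (wpow (E u (2*i-2)) (u (2*i-1))) (freeman a b 0 (0,0) L1) \<and>
    suffix (wpow (E u (2*i-1)) (u (2*i) - 1)) (freeman a b 0 L1 (b,a))"
proof -
  obtain j where ij: "i = Suc j" using assms(4) by (cases i) auto
  define n where "n = Suc (Suc (2*j))"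
  have n2: "2*i = n" "2*i-1 = Suc(2*j)" "2*i-2 = 2*j" using ij n_def by auto
  have upos: "\<forall>k\<in>{1..n}. u k \<ge> 1" using assms(5) n2 by simp
  define p where "p = cp u n"
  define q where "q = cq u n"
  define p1 where "p1 = cp u (Suc (2*j))"
  define q1 where "q1 = cq u (Suc (2*j))"
  define p0 where "p0 = cp u (2*j)"
  define q0 where "q0 = cq u (2*j)"
  have recp: "p = u n * p1 + p0" and recq: "q = u n * q1 + q0"
    unfolding p_def p1_def p0_def q_def q1_def q0_def n_def by simp_all
  have det: "p1 * q = q1 * p + 1" unfolding p_def q_def p1_def q1_def n_def
    by (rule det_odd) simp
  have un: "u n \<ge> 1" using upos n_def by simp
  have sub: "\<And>m. m \<le> n \<Longrightarrow> \<forall>k\<in>{1..m}. u k \<ge> 1" using upos by auto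
  have pq: "p \<ge> 1" "q \<ge> 1" using cpq_pos[OF upos] unfolding p_def q_def n_def by auto
  have pq1: "p1 \<ge> 1" "q1 \<ge> 1" using cpq_pos[OF sub[of "Suc (2*j)"]] unfolding p1_def q1_def n_def by auto
  have pq0: "q0 \<ge> 1" using cpq_pos[OF sub[of "2*j"]] unfolding q0_def n_def by auto
  have cfv: "cfv (map u [1..<Suc n]) = real q / real p" unfolding p_def q_def
    by (rule cfv_conv[OF upos]) (simp add: n_def)
  have "real_of_int a / real_of_int b = real p / real q"
    using assms(6) n2 cfv pq by (simp add: cf0_def)
  hence "real_of_int a * real q = real_of_int b * real p" using assms(2,3) pq
    by (simp add: field_simps)
  hence aq: "a * int q = b * int p"
    by (metis of_int_eq_iff of_int_mult of_int_of_nat_eq)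
  have "a dvd b * int p" using aq by (metis dvd_triv_left)
  hence "a dvd int p" using assms(1) coprime_dvd_mult_right_iff by blast
  then obtain t where t: "int p = a * t" by (elim dvdE)
  have "a * int q = a * (b * t)" using aq t by (simp add: algebra_simps)
  hence qt: "int q = b * t" using assms(2) by simp
  have detI: "int p1 * int q = int q1 * int p + 1" using det by (metis of_nat_add of_nat_mult of_nat_1)
  have "t * (int p1 * b - int q1 * a) = 1" using detI t qt by (simp add: algebra_simps)
  moreover have "t > 0" using t pq assms(2) by (metis of_nat_0_less_iff less_le_trans zero_less_one
      pos_imp_zdiv_pos_iff nonzero_mult_div_cancel_left less_irrefl zero_less_mult_pos)
  ultimately have "t = 1" using pos_zmult_eq_1_iff by blast
  hence ha: "a = int p" and hb: "b = int q" using t qt by auto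
  obtain x y where L1: "L1 = (x, y)" by (cases L1)
  have ll: "a * x - b * y = a + b - 1" using assms(7) assms(2,3) unfolding L1 lower_leaning_def by simp
  define x0 where "x0 = int q1 + 1"
  define y0 where "y0 = int p1 - 1"
  have ll0: "a * x0 - b * y0 = a + b - 1" unfolding x0_def y0_def ha hb using detI
    by (simp add: algebra_simps)
  have "a * (x - x0) = b * (y - y0)" using ll ll0 by (simp add: algebra_simps)
  hence "b dvd a * (x - x0)" by simp
  moreover have "coprime b a" using assms(1) by (simp add: coprime_commute)
  ultimately have "b dvd (x - x0)" using coprime_dvd_mult_right_iff by blast
  then obtain k where k: "x - x0 = b * k" by (elim dvdE)
  have x0b: "x0 \<le> b" unfolding x0_def hb recq using un pq0
  proof -
    have "q1 \<le> u n * q1" using un by simp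
    thus "int q1 + 1 \<le> int (u n * q1 + q0)" using pq0 by linarith
  qed
  have "x0 \<ge> 1" unfolding x0_def by simp
  hence "\<bar>b * k\<bar> < b" using k x0b assms(8,9) unfolding L1 by simp
  have "k = 0"
  proof (rule ccontr)
    assume "k \<noteq> 0"
    hence "\<bar>k\<bar> \<ge> 1" by simp
    hence "b * \<bar>k\<bar> \<ge> b * 1" using assms(2,3) by (intro mult_left_mono) auto
    moreover have "\<bar>b * k\<bar> = b * \<bar>k\<bar>" using assms(2,3) by (simp add: abs_mult)
    ultimately show False using \<open>\<bar>b * k\<bar> < b\<close> by simp
  qed
  hence xx: "x = x0" using k by simp
  hence "b * (y - y0) = 0" using \<open>a * (x - x0) = b * (y - y0)\<close> by simp
  hence yy: "y = y0" using assms(2,3) by simp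
  have G1: "(fst L1 - 0, snd L1 - 0) = (int q1 + 1, int p1 - 1)"
    unfolding L1 xx yy x0_def y0_def by simp
  have G2: "(b - fst L1, a - snd L1) =
           ((int (u n) - 1) * int q1 + int q0 - 1, (int (u n) - 1) * int p1 + int p0 + 1)"
    unfolding L1 xx yy x0_def y0_def ha hb recp recq by (simp add: algebra_simps)
  define N where "N = a + b"
  define m where "m = p1 + q1"
  define kk where "kk = p + q - m"
  have mle: "m \<le> p + q" unfolding m_def recp recq using un
    by (metis add_le_mono le_add1 le_trans mult_le_mono1 mult_1 )
  have mk: "m + kk = p + q" unfolding kk_def using mle by simp
  have f1: "freeman a b 0 (0,0) L1 = wordr a N 0 m"
  proof -
    have "nat ((fst L1 + snd L1) - (fst (0::int,0::int) + snd (0::int,0::int))) = m"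
      unfolding L1 xx yy x0_def y0_def m_def by simp
    hence "freeman a b 0 (0,0) L1 = fword a b 0 (0,0) m" unfolding freeman_def by simp
    also have "\<dots> = wordr a (a+b) (a*0 - b*0) m"
      by (rule fword_wordr) (use assms(2,3) in simp_all)
    finally show ?thesis unfolding N_def by simp
  qed
  have f2: "freeman a b 0 L1 (b,a) = wordr a N (N - 1) kk"
  proof -
    have "nat ((fst (b,a) + snd (b,a)) - (fst L1 + snd L1)) = kk"
      unfolding L1 xx yy x0_def y0_def kk_def m_def ha hb using mle m_def by simp
    hence "freeman a b 0 L1 (b,a) = fword a b 0 (x0,y0) kk" unfolding freeman_def L1 xx yy by simp
    also have "\<dots> = wordr a (a+b) (a*x0 - b*y0) kk"
      by (rule fword_wordr) (use assms(2,3) ll0 in simp_all)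
    finally show ?thesis unfolding N_def ll0 by simp
  qed
  have Npos: "N > 0" unfolding N_def using assms(2,3) by simp
  have "a * int m = (N - 1) + N * y0" unfolding N_def
  proof -
    have "int m = x0 + y0" unfolding m_def x0_def y0_def by simp
    thus "a * int m = (a + b - 1) + (a + b) * y0" using ll0 by (simp add: algebra_simps)
  qed
  hence "wordr a N (a * int m) kk = wordr a N (N - 1) kk" using wordr_shift[OF Npos] by simp
  hence Ew: "E u n = freeman a b 0 (0,0) L1 @ freeman a b 0 L1 (b,a)"
  proof -
    assume sh: "wordr a N (a * int m) kk = wordr a N (N - 1) kk"
    have "E u n = chr p q" unfolding p_def q_def by (rule E_chr)
    also have "\<dots> = wordr a N 0 (p+q)" unfolding N_def ha hb using wordr_chr[of p q] by simp
    also have "\<dots> = wordr a N 0 m @ wordr a N (a * int m) kk" using wordr_add[of a N 0 m kk] mk by simp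
    finally show ?thesis using f1 f2 sh by simp
  qed
  have lf1: "length (freeman a b 0 (0,0) L1) = m" using f1 by simp
  have En: "E u n = E u (2*j) @ wpow (E u (Suc (2*j))) (u n)" unfolding n_def by simp
  obtain X where EX: "E u (Suc (2*j)) = wpow (E u (2*j)) (u (Suc (2*j))) @ X"
  proof (cases j)
    case 0 then show ?thesis using that by simp
  next
    case (Suc j')
    have "Suc (2*j) = Suc (Suc (Suc (2*j')))" "2*j = Suc (Suc (2*j'))" using Suc by auto
    then show ?thesis using that by simp
  qed
  obtain un' where un': "u n = Suc un'" using un by (cases "u n") auto
  define W where "W = wpow (E u (2*j)) (u (Suc (2*j)))"
  define S where "S = wpow (E u (Suc (2*j))) (u n - 1)"
  have lW: "length W \<le> m"
  proof -
    have "length (E u (Suc (2*j))) = m" unfolding m_def p1_def q1_def by (simp add: length_E)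
    thus ?thesis using EX unfolding W_def by simp
  qed
  have E1: "E u n = W @ (E u (2*j) @ X @ wpow (E u (Suc (2*j))) un')"
  proof -
    have "E u n = E u (2*j) @ (W @ X) @ wpow (E u (Suc (2*j))) un'"
      using En EX un' unfolding W_def by (simp add: wpow_Suc)
    also have "E u (2*j) @ W = W @ E u (2*j)" unfolding W_def by (metis wpow_Suc wpow_Suc2)
    hence "E u (2*j) @ (W @ X) @ wpow (E u (Suc (2*j))) un' = W @ (E u (2*j) @ X @ wpow (E u (Suc (2*j))) un')"
      by (metis append_assoc)
    finally show ?thesis .
  qed
  have G3: "prefix W (freeman a b 0 (0,0) L1)"
  proof -
    let ?f1 = "freeman a b 0 (0,0) L1" and ?f2 = "freeman a b 0 L1 (b,a)"
    have "?f1 = take (length ?f1) (?f1 @ ?f2)" by simp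
    also have "\<dots> = take (length ?f1) (E u n)" using Ew by simp
    also have "\<dots> = W @ take (length ?f1 - length W) (E u (2*j) @ X @ wpow (E u (Suc (2*j))) un')"
      using E1 lW lf1 by simp
    finally show ?thesis unfolding prefix_def by blast
  qed
  have E2: "E u n = (E u (2*j) @ E u (Suc (2*j))) @ S"
    using En un' unfolding S_def by (simp add: wpow_Suc)
  have G4: "suffix S (freeman a b 0 L1 (b,a))"
  proof -
    let ?f1 = "freeman a b 0 (0,0) L1" and ?f2 = "freeman a b 0 L1 (b,a)"
    have lA: "length ?f1 \<le> length (E u (2*j) @ E u (Suc (2*j)))"
      using lf1 unfolding m_def p1_def q1_def by (simp add: length_E)
    have "?f2 = drop (length ?f1) (?f1 @ ?f2)" by simp
    also have "\<dots> = drop (length ?f1) ((E u (2*j) @ E u (Suc (2*j))) @ S)" using Ew E2 by simp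
    also have "\<dots> = drop (length ?f1) (E u (2*j) @ E u (Suc (2*j))) @ S"
      using lA by (simp only: drop_append) simp
    finally show ?thesis unfolding suffix_def by blast
  qed
  show ?thesis
    using G1 G2 G3 G4 unfolding n2(2) n2(3) n2(1) W_def S_def p_def q_def p1_def q1_def p0_def q0_def
    by (simp add: n_def)
qed

end
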